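(* Let $k\geq 2$ be an integer and consider an instance of the cake-cutting problem with $k$ players (with hungry and closed preferences, as described in the context). Then there exists a division of the cake into $k-1$ (connected) pieces such that, no matter which one player leaves, there is an envy-free assignment of the $k-1$ pieces to the remaining $k-1$ players, i.e., a bijection between the pieces and the remaining players such that each remaining player is assigned a piece that is among her preferred pieces in this division.
   Context: The cake is the segment $[0,1]$. A division of the cake into $n$ pieces is a partition of $[0,1]$ into $n$ intervals (pieces, numbered from left to right, possibly of length zero); whether endpoints belong to an interval does not matter, so a division into $n$ pieces is identified with the vector $(y_1,\ldots,y_n)$ of piece lengths, a point of the standard simplex $\{y\in\mathbb{R}_{\ge0}^n:\sum_j y_j=1\}$. For each division, each player has a nonempty set of preferred pieces (she may prefer several). Hungry assumption: in any division, each player prefers at least one piece of positive length. Closed preferences assumption: if a player prefers the $j$-th piece in each division of a converging sequence of divisions (into the same number of pieces), she also prefers the $j$-th piece in the limit division. An assignment of pieces to players is envy-free if each player is assigned a piece that she prefers (weakly) to all other pieces of the division, i.e., one of her preferred pieces. *)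

theory Defs
  imports "HOL-Analysis.Analysis"
begin

text \<open>A division of [0,1] into n pieces, identified with the vector of piece lengths
  (y 0, ..., y (n-1)); canonically represented as a function nat => real vanishing
  outside {..<n}.\<close>
definition division :: "nat \<Rightarrow> (nat \<Rightarrow> real) set" where
  "division n = {y. (\<forall>j<n. 0 \<le> y j) \<and> (\<forall>j\<ge>n. y j = 0) \<and> (\<Sum>j<n. y j) = 1}"

text \<open>pref i n y = set of pieces (indices in {..<n}) that player i prefers in the division y
  into n pieces.  A cake-cutting instance with k players (players 0..k-1).\<close>
definition preferences_wf :: "nat \<Rightarrow> (nat \<Rightarrow> nat \<Rightarrow> (nat \<Rightarrow> real) \<Rightarrow> nat set) \<Rightarrow> bool" where
  "preferences_wf k pref \<longleftrightarrow>
     (\<forall>i<k. \<forall>n. \<forall>y\<in>division n. pref i n y \<noteq> {} \<and> pref i n y \<subseteq> {..<n})"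

definition hungry :: "nat \<Rightarrow> (nat \<Rightarrow> nat \<Rightarrow> (nat \<Rightarrow> real) \<Rightarrow> nat set) \<Rightarrow> bool" where
  "hungry k pref \<longleftrightarrow> (\<forall>i<k. \<forall>n. \<forall>y\<in>division n. \<exists>j\<in>pref i n y. y j > 0)"

definition closed_preferences :: "nat \<Rightarrow> (nat \<Rightarrow> nat \<Rightarrow> (nat \<Rightarrow> real) \<Rightarrow> nat set) \<Rightarrow> bool" where
  "closed_preferences k pref \<longleftrightarrow>
     (\<forall>i<k. \<forall>n. \<forall>d :: nat \<Rightarrow> nat \<Rightarrow> real. \<forall>y j.
        (\<forall>m. d m \<in> division n) \<longrightarrow> y \<in> division n \<longrightarrow>
        (\<forall>t. (\<lambda>m. d m t) \<longlonglongrightarrow> y t) \<longrightarrow>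
        (\<forall>m. j \<in> pref i n (d m)) \<longrightarrow> j \<in> pref i n y)"

end

theory Submission
  imports Defs
begin


definition cube :: "nat \<Rightarrow> (nat \<Rightarrow> real) set" where
  "cube n = {x. (\<forall>i<n. 0 \<le> x i \<and> x i \<le> 1) \<and> (\<forall>i\<ge>n. x i = 0)}"

definition seqcont :: "nat \<Rightarrow> (nat \<Rightarrow> real) set \<Rightarrow> ((nat \<Rightarrow> real) \<Rightarrow> (nat \<Rightarrow> real)) \<Rightarrow> bool" where
  "seqcont n D f \<longleftrightarrow> (\<forall>X x. (\<forall>m. X m \<in> D) \<longrightarrow> x \<in> D \<longrightarrow> (\<forall>i. (\<lambda>m. X m i) \<longlonglongrightarrow> x i)
      \<longrightarrow> (\<forall>i<n. (\<lambda>m. f (X m) i) \<longlonglongrightarrow> f x i))"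

lemma seqcontD:
  assumes "seqcont n D f" "\<And>m. X m \<in> D" "x \<in> D" "\<And>i. (\<lambda>m. X m i) \<longlonglongrightarrow> x i" "i < n"
  shows "(\<lambda>m. f (X m) i) \<longlonglongrightarrow> f x i"
  using assms unfolding seqcont_def by blast

lemma subseq_conv:
  fixes X :: "nat \<Rightarrow> nat \<Rightarrow> real"
  assumes "\<forall>m i. i < n \<longrightarrow> X m i \<in> {0..1}"
  shows "\<exists>r L. strict_mono r \<and> (\<forall>i<n. L i \<in> {0..1} \<and> (\<lambda>m. X (r m) i) \<longlonglongrightarrow> L i)"
  using assms
proof (induction n)
  case 0
  then show ?case by (auto intro: strict_monoI)
next
  case (Suc n)
  then obtain r L where r: "strict_mono r" and L: "\<forall>i<n. L i \<in> {0..1} \<and> (\<lambda>m. X (r m) i) \<longlonglongrightarrow> L i"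
    by auto
  have "seq_compact {0..1::real}" by (rule compact_imp_seq_compact) simp
  moreover have "\<forall>m. X (r m) n \<in> {0..1}" using Suc.prems by auto
  ultimately obtain l r2 where l: "l \<in> {0..1}" and r2: "strict_mono r2"
    and lim: "((\<lambda>m. X (r m) n) \<circ> r2) \<longlonglongrightarrow> l"
    unfolding seq_compact_def by metis
  show ?case
  proof (intro exI conjI allI impI)
    show "strict_mono (r \<circ> r2)" using r r2 by (simp add: strict_mono_o)
    fix i assume i: "i < Suc n"
    show "(L(n := l)) i \<in> {0..1}" using L l i by (auto simp: less_Suc_eq)
    show "(\<lambda>m. X ((r \<circ> r2) m) i) \<longlonglongrightarrow> (L(n := l)) i"
    proof (cases "i = n")
      case True
      then show ?thesis using lim by (simp add: comp_def)
    next
      case False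
      then have "i < n" using i by simp
      then have "(\<lambda>m. X (r m) i) \<longlonglongrightarrow> L i" using L by auto
      from LIMSEQ_subseq_LIMSEQ[OF this r2] show ?thesis using False by (simp add: comp_def)
    qed
  qed
qed

lemma inv_suc_subseq: "strict_mono r \<Longrightarrow> (\<lambda>m. 1 / real (Suc (r m))) \<longlonglongrightarrow> 0"
proof -
  assume r: "strict_mono r"
  have "(\<lambda>m. 1 / real (Suc m)) \<longlonglongrightarrow> 0"
    using LIMSEQ_inverse_real_of_nat by (simp add: inverse_eq_divide)
  from LIMSEQ_subseq_LIMSEQ[OF this r] show ?thesis by (simp add: comp_def)
qed

lemma close_seq:
  fixes Y X :: "nat \<Rightarrow> real"
  assumes "X \<longlonglongrightarrow> l" and "(\<lambda>m. e m) \<longlonglongrightarrow> 0" and "\<And>m. \<bar>Y m - X m\<bar> \<le> e m"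
  shows "Y \<longlonglongrightarrow> l"
proof -
  have "(\<lambda>m. Y m - X m) \<longlonglongrightarrow> 0"
    by (rule Lim_null_comparison[OF _ assms(2)]) (use assms(3) in \<open>auto intro: always_eventually\<close>)
  from tendsto_add[OF this assms(1)] show ?thesis by simp
qed

lemma brouwer_cube_untyped:
  assumes f_into: "\<forall>x\<in>cube n. f x \<in> cube n" and cont: "seqcont n (cube n) f"
  shows "\<exists>x\<in>cube n. \<forall>i<n. f x i = x i"
proof -
  define sc where "sc p x = (\<lambda>i. if i < n then real (x i) / real p else 0)" for p :: nat and x :: "nat \<Rightarrow> nat"
  have sc_cube: "sc p x \<in> cube n" if "0 < p" "\<forall>i<n. x i \<le> p" for p x
    using that by (auto simp: cube_def sc_def)
  define lab where "lab p x i = (if x i = 0 then 0 else if x i = p then 1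
      else if sc p x i \<le> f (sc p x) i then 0 else (1::nat))" for p x i
  have lab01: "lab p x i = 0 \<or> lab p x i = 1" for p x i by (auto simp: lab_def)
  have lab0: "sc p x i \<le> f (sc p x) i" if "lab p x i = 0" "0 < p" "\<forall>i<n. x i \<le> p" "i < n" for p x i
  proof -
    have "f (sc p x) \<in> cube n" using f_into sc_cube that by auto
    then show ?thesis using that by (auto simp: lab_def cube_def sc_def split: if_splits)
  qed
  have lab1: "f (sc p x) i \<le> sc p x i" if "lab p x i = 1" "0 < p" "\<forall>i<n. x i \<le> p" "i < n" for p x i
  proof -
    have "f (sc p x) \<in> cube n" using f_into sc_cube that by auto
    then show ?thesis using that by (auto simp: lab_def cube_def sc_def split: if_splits)
  qed
  have key: "\<exists>q. (\<forall>i<n. q i < Suc m) \<and> (\<forall>i<n. \<exists>a b. (\<forall>j<n. q j \<le> a j \<and> a j \<le> q j + 1)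
      \<and> (\<forall>j<n. q j \<le> b j \<and> b j \<le> q j + 1)
      \<and> sc (Suc m) a i \<le> f (sc (Suc m) a) i \<and> f (sc (Suc m) b) i \<le> sc (Suc m) b i)" for m
  proof -
    let ?p = "Suc m"
    obtain q where q1: "\<forall>i<n. q i < ?p"
      and q2: "\<forall>i<n. \<exists>r s. (\<forall>j<n. q j \<le> r j \<and> r j \<le> q j + 1) \<and> (\<forall>j<n. q j \<le> s j \<and> s j \<le> q j + 1)
          \<and> lab ?p r i \<noteq> lab ?p s i"
    proof -
      have h1: "\<forall>x. (\<forall>i<n. x i \<le> ?p) \<longrightarrow> (\<forall>i<n. lab ?p x i = 0 \<or> lab ?p x i = 1)" using lab01 by blast
      have h2: "\<forall>x. (\<forall>i<n. x i \<le> ?p) \<longrightarrow> (\<forall>i<n. x i = 0 \<longrightarrow> lab ?p x i = 0)" by (auto simp: lab_def)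
      have h3: "\<forall>x. (\<forall>i<n. x i \<le> ?p) \<longrightarrow> (\<forall>i<n. x i = ?p \<longrightarrow> lab ?p x i = 1)" by (auto simp: lab_def)
      show ?thesis using kuhn_lemma[of ?p n "lab ?p", OF _ h1 h2 h3] that by blast
    qed
    show ?thesis
    proof (intro exI conjI)
      show "\<forall>i<n. q i < ?p" by fact
      show "\<forall>i<n. \<exists>a b. (\<forall>j<n. q j \<le> a j \<and> a j \<le> q j + 1) \<and> (\<forall>j<n. q j \<le> b j \<and> b j \<le> q j + 1)
        \<and> sc ?p a i \<le> f (sc ?p a) i \<and> f (sc ?p b) i \<le> sc ?p b i"
      proof (intro allI impI)
      fix i assume i: "i < n"
      obtain r s where r: "\<forall>j<n. q j \<le> r j \<and> r j \<le> q j + 1" and s: "\<forall>j<n. q j \<le> s j \<and> s j \<le> q j + 1"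
        and d: "lab ?p r i \<noteq> lab ?p s i" using q2 i by blast
      have bnd: "\<forall>j<n. c j \<le> ?p" if "\<forall>j<n. q j \<le> c j \<and> c j \<le> q j + 1" for c
      proof (intro allI impI)
        fix j assume j: "j < n"
        then have "c j \<le> q j + 1" "q j < ?p" using that q1 by auto
        then show "c j \<le> ?p" by linarith
      qed
      have rp: "\<forall>j<n. r j \<le> ?p" using bnd r by blast
      have sp: "\<forall>j<n. s j \<le> ?p" using bnd s by blast
      show "\<exists>a b. (\<forall>j<n. q j \<le> a j \<and> a j \<le> q j + 1) \<and> (\<forall>j<n. q j \<le> b j \<and> b j \<le> q j + 1)
        \<and> sc ?p a i \<le> f (sc ?p a) i \<and> f (sc ?p b) i \<le> sc ?p b i"
      proof (cases "lab ?p r i = 0")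
        case True
        then have "lab ?p s i = 1" using d lab01 by metis
        have "sc ?p r i \<le> f (sc ?p r) i" using lab0[OF True _ rp i] by simp
        moreover have "f (sc ?p s) i \<le> sc ?p s i" using lab1[OF \<open>lab ?p s i = 1\<close> _ sp i] by simp
        ultimately show ?thesis using r s by blast
      next
        case False
        then have h: "lab ?p r i = 1" "lab ?p s i = 0" using d lab01 by metis+
        have "sc ?p s i \<le> f (sc ?p s) i" using lab0[OF h(2) _ sp i] by simp
        moreover have "f (sc ?p r) i \<le> sc ?p r i" using lab1[OF h(1) _ rp i] by simp
        ultimately show ?thesis using r s by blast
      qed
    qed
    qed
  qed
  then obtain Q where Q: "\<And>m. \<forall>i<n. Q m i < Suc m"
    and Q2: "\<And>m. \<forall>i<n. \<exists>a b. (\<forall>j<n. Q m j \<le> a j \<and> a j \<le> Q m j + 1)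
      \<and> (\<forall>j<n. Q m j \<le> b j \<and> b j \<le> Q m j + 1)
      \<and> sc (Suc m) a i \<le> f (sc (Suc m) a) i \<and> f (sc (Suc m) b) i \<le> sc (Suc m) b i"
    by metis
  then obtain A B where AB: "\<And>m i. i < n \<Longrightarrow> (\<forall>j<n. Q m j \<le> A m i j \<and> A m i j \<le> Q m j + 1)
      \<and> (\<forall>j<n. Q m j \<le> B m i j \<and> B m i j \<le> Q m j + 1)
      \<and> sc (Suc m) (A m i) i \<le> f (sc (Suc m) (A m i)) i \<and> f (sc (Suc m) (B m i)) i \<le> sc (Suc m) (B m i) i"
    by metis
  define X where "X m = sc (Suc m) (Q m)" for m
  have "\<forall>m i. i < n \<longrightarrow> X m i \<in> {0..1}"
  proof (intro allI impI)
    fix m i assume i: "i < n"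
    then have "Q m i \<le> m" using Q less_Suc_eq_le by blast
    then have "real (Q m i) \<le> real (Suc m)" by simp
    then show "X m i \<in> {0..1}" using i by (simp add: X_def sc_def)
  qed
  then obtain r L where r: "strict_mono r" and L: "\<forall>i<n. L i \<in> {0..1} \<and> (\<lambda>m. X (r m) i) \<longlonglongrightarrow> L i"
    using subseq_conv by blast
  define x where "x i = (if i < n then L i else 0)" for i
  have x: "x \<in> cube n" using L by (auto simp: cube_def x_def)
  have e0: "(\<lambda>m. 1 / real (Suc (r m))) \<longlonglongrightarrow> 0" using r by (rule inv_suc_subseq)
  have conv: "(\<lambda>m. sc (Suc (r m)) (C (r m)) j) \<longlonglongrightarrow> x j"
    if C: "\<And>m. \<forall>j<n. Q m j \<le> C m j \<and> C m j \<le> Q m j + 1" for C j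
  proof (cases "j < n")
    case True
    have "\<bar>sc (Suc (r m)) (C (r m)) j - X (r m) j\<bar> \<le> 1 / real (Suc (r m))" for m
    proof -
      have "Q (r m) j \<le> C (r m) j" "C (r m) j \<le> Q (r m) j + 1" using C True by auto
      then have "real (C (r m) j) - real (Q (r m) j) \<in> {0..1}" by auto
      then show ?thesis using True
        by (auto simp: sc_def X_def diff_divide_distrib[symmetric] divide_le_cancel)
    qed
    then show ?thesis using close_seq[OF _ e0] L True by (auto simp: x_def)
  next
    case False
    then show ?thesis by (simp add: sc_def x_def)
  qed
  have "\<forall>i<n. f x i = x i"
  proof (intro allI impI)
    fix i assume i: "i < n"
    have inc: "sc (Suc m) C \<in> cube n" if "\<forall>j<n. Q m j \<le> C j \<and> C j \<le> Q m j + 1" for m C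
    proof (rule sc_cube)
      show "\<forall>j<n. C j \<le> Suc m"
      proof (intro allI impI)
        fix j assume j: "j < n"
        then have "C j \<le> Q m j + 1" "Q m j < Suc m" using that Q by auto
        then show "C j \<le> Suc m" by linarith
      qed
    qed simp
    let ?Ya = "\<lambda>m. sc (Suc (r m)) (A (r m) i)"
    let ?Yb = "\<lambda>m. sc (Suc (r m)) (B (r m) i)"
    have ca: "\<forall>j. (\<lambda>m. ?Ya m j) \<longlonglongrightarrow> x j" using conv[of "\<lambda>m. A m i"] AB[OF i] by blast
    have cb: "\<forall>j. (\<lambda>m. ?Yb m j) \<longlonglongrightarrow> x j" using conv[of "\<lambda>m. B m i"] AB[OF i] by blast
    have ina: "\<forall>m. ?Ya m \<in> cube n" using inc AB[OF i] by blast
    have inb: "\<forall>m. ?Yb m \<in> cube n" using inc AB[OF i] by blast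
    have fa: "(\<lambda>m. f (?Ya m) i) \<longlonglongrightarrow> f x i" by (rule seqcontD[where X="?Ya", OF cont _ x _ i]) (use ina ca in auto)
    have fb: "(\<lambda>m. f (?Yb m) i) \<longlonglongrightarrow> f x i" by (rule seqcontD[where X="?Yb", OF cont _ x _ i]) (use inb cb in auto)
    have "x i \<le> f x i"
      by (rule LIMSEQ_le[OF ca[rule_format] fa]) (use AB[OF i] in auto)
    moreover have "f x i \<le> x i"
      by (rule LIMSEQ_le[OF fb cb[rule_format]]) (use AB[OF i] in auto)
    ultimately show "f x i = x i" by simp
  qed
  then show ?thesis using x by blast
qed


lemma division_cube: "y \<in> division n \<Longrightarrow> y \<in> cube n"
proof -
  assume y: "y \<in> division n"
  have "y i \<le> 1" if "i < n" for i
  proof -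
    have "y i \<le> (\<Sum>j<n. y j)" using y that by (intro member_le_sum) (auto simp: division_def)
    then show ?thesis using y by (simp add: division_def)
  qed
  then show ?thesis using y by (auto simp: division_def cube_def)
qed

lemma brouwer_division:
  assumes n: "n \<ge> 1" and into: "\<forall>y\<in>division n. T y \<in> division n" and cont: "seqcont n (division n) T"
  shows "\<exists>y\<in>division n. \<forall>i<n. T y i = y i"
proof -
  define z where "z x = (\<lambda>j. x j / max 1 (\<Sum>i<n. x i))" for x :: "nat \<Rightarrow> real"
  define \<rho> where "\<rho> x = (\<lambda>j. if j < n then z x j + (1 - (\<Sum>i<n. z x i)) / real n else 0)" for x
  have sumz: "(\<Sum>i<n. z x i) = (\<Sum>i<n. x i) / max 1 (\<Sum>i<n. x i)" for x
    by (simp add: z_def sum_divide_distrib)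
  have rho_in: "\<rho> x \<in> division n" if x: "x \<in> cube n" for x
  proof -
    have s0: "0 \<le> (\<Sum>i<n. x i)" using x by (intro sum_nonneg) (auto simp: cube_def)
    have z0: "0 \<le> z x j" if "j < n" for j using x that by (auto simp: z_def cube_def)
    have "(\<Sum>i<n. z x i) \<le> 1" unfolding sumz using s0 by (auto simp: divide_le_eq)
    then have a: "0 \<le> (1 - (\<Sum>i<n. z x i)) / real n" by simp
    have "(\<Sum>j<n. \<rho> x j) = (\<Sum>j<n. z x j) + real n * ((1 - (\<Sum>i<n. z x i)) / real n)"
      by (simp add: \<rho>_def sum.distrib)
    also have "\<dots> = 1" using n by simp
    finally show ?thesis using z0 a by (auto simp: division_def \<rho>_def)
  qed
  define f where "f x = T (\<rho> x)" for x
  have f_into: "\<forall>x\<in>cube n. f x \<in> cube n" using into rho_in division_cube by (auto simp: f_def)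
  have "seqcont n (cube n) f"
    unfolding seqcont_def
  proof (intro allI impI)
    fix X x i assume X: "\<forall>m. X m \<in> cube n" and x: "x \<in> cube n" and lim: "\<forall>i. (\<lambda>m. X m i) \<longlonglongrightarrow> x i" and i: "i < n"
    have lz: "(\<lambda>m. z (X m) j) \<longlonglongrightarrow> z x j" for j
      unfolding z_def
      by (intro tendsto_intros lim[rule_format] tendsto_sum) (auto simp: max_def)
    have lr: "(\<lambda>m. \<rho> (X m) j) \<longlonglongrightarrow> \<rho> x j" for j
      unfolding \<rho>_def by (cases "j < n") (auto intro!: tendsto_intros lz)
    show "(\<lambda>m. f (X m) i) \<longlonglongrightarrow> f x i"
      unfolding f_def by (rule seqcontD[where X="\<lambda>m. \<rho> (X m)", OF cont _ _ _ i]) (use X x rho_in lr in auto)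
  qed
  then obtain x where x: "x \<in> cube n" and fx: "\<forall>i<n. f x i = x i"
    using brouwer_cube_untyped f_into by blast
  have Tr: "T (\<rho> x) \<in> division n" using into rho_in x by blast
  have xe: "x = T (\<rho> x)"
  proof
    fix i show "x i = T (\<rho> x) i"
      using fx Tr x by (cases "i < n") (auto simp: f_def division_def cube_def)
  qed
  then have xd: "x \<in> division n" using Tr by simp
  then have s1: "(\<Sum>i<n. x i) = 1" by (simp add: division_def)
  have "\<rho> x = x"
  proof
    fix j show "\<rho> x j = x j"
      using xd s1 sumz[of x] by (auto simp: \<rho>_def z_def division_def)
  qed
  then show ?thesis using xd xe by metis
qed



lemma hall:
  fixes E :: "'a \<Rightarrow> 'b set"
  assumes "finite I" "\<forall>i\<in>I. finite (E i)" "\<forall>S\<subseteq>I. card S \<le> card (\<Union> (E ` S))"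
  shows "\<exists>\<sigma>. inj_on \<sigma> I \<and> (\<forall>i\<in>I. \<sigma> i \<in> E i)"
  using assms
proof (induction "card I" arbitrary: I E rule: less_induct)
  case less
  note fin = less.prems(1) and finE = less.prems(2) and hc = less.prems(3)
  have finU: "finite (\<Union> (E ` S))" if "S \<subseteq> I" for S
    using that fin finE by (meson finite_UN_I finite_subset subsetD)
  show ?case
  proof (cases "I = {}")
    case True then show ?thesis by auto
  next
    case nonempty: False
    show ?thesis
    proof (cases "\<exists>S. S \<subseteq> I \<and> S \<noteq> {} \<and> S \<noteq> I \<and> card (\<Union> (E ` S)) \<le> card S")
      case True
      then obtain S where S: "S \<subseteq> I" "S \<noteq> {}" "S \<noteq> I" "card (\<Union> (E ` S)) \<le> card S" by blast
      define N where "N = \<Union> (E ` S)"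
      have cN: "card N = card S" using S hc unfolding N_def by (meson le_antisym)
      have finS: "finite S" using S fin finite_subset by blast
      have "card S < card I" using S fin by (meson psubset_card_mono psubsetI)
      moreover have "\<forall>T\<subseteq>S. card T \<le> card (\<Union> (E ` T))" using hc S by auto
      ultimately obtain \<sigma>1 where s1: "inj_on \<sigma>1 S" "\<forall>i\<in>S. \<sigma>1 i \<in> E i"
        using less.hyps[of S E] finS finE S by blast
      define E2 where "E2 i = E i - N" for i
      have "card (I - S) < card I" using S fin nonempty
        by (metis Diff_subset card_Diff_subset card_gt_0_iff diff_less finS finite_subset le_zero_eq
            card_mono psubsetI psubset_card_mono subset_empty Diff_eq_empty_iff)
      moreover have "\<forall>T\<subseteq>I - S. card T \<le> card (\<Union> (E2 ` T))"
      proof (intro allI impI)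
        fix T assume T: "T \<subseteq> I - S"
        have finT: "finite T" using T fin finite_subset by blast
        have u: "\<Union> (E2 ` T) = \<Union> (E ` (S \<union> T)) - N" by (auto simp: E2_def N_def)
        have sub: "N \<subseteq> \<Union> (E ` (S \<union> T))" by (auto simp: N_def)
        have finST: "finite (\<Union> (E ` (S \<union> T)))" using finU S T by auto
        have "card (\<Union> (E2 ` T)) = card (\<Union> (E ` (S \<union> T))) - card N"
          unfolding u using sub finST by (simp add: card_Diff_subset finite_subset)
        moreover have "S \<union> T \<subseteq> I" using S T by blast
        then have "card (S \<union> T) \<le> card (\<Union> (E ` (S \<union> T)))" using hc by blast
        moreover have "card (S \<union> T) = card S + card T" using T finS finT by (subst card_Un_disjoint) auto
        ultimately show "card T \<le> card (\<Union> (E2 ` T))" using cN by linarith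
      qed
      moreover have "\<forall>i\<in>I - S. finite (E2 i)" using finE by (auto simp: E2_def)
      ultimately obtain \<sigma>2 where s2: "inj_on \<sigma>2 (I - S)" "\<forall>i\<in>I - S. \<sigma>2 i \<in> E2 i"
        using less.hyps[of "I - S" E2] fin by blast
      define \<sigma> where "\<sigma> i = (if i \<in> S then \<sigma>1 i else \<sigma>2 i)" for i
      have "inj_on \<sigma> I"
      proof (rule inj_onI)
        fix x y assume xy: "x \<in> I" "y \<in> I" "\<sigma> x = \<sigma> y"
        show "x = y"
        proof (cases "x \<in> S"; cases "y \<in> S")
          assume "x \<in> S" "y \<in> S" then show ?thesis using xy s1 by (auto simp: \<sigma>_def inj_on_def)
        next
          assume "x \<notin> S" "y \<notin> S" then show ?thesis using xy s2 by (auto simp: \<sigma>_def inj_on_def)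
        next
          assume a: "x \<in> S" "y \<notin> S"
          then have "\<sigma> x \<in> N" using s1 by (auto simp: \<sigma>_def N_def)
          moreover have "\<sigma> y \<notin> N" using a s2 xy(2) by (auto simp: \<sigma>_def E2_def)
          ultimately show ?thesis using xy by simp
        next
          assume a: "x \<notin> S" "y \<in> S"
          then have "\<sigma> y \<in> N" using s1 by (auto simp: \<sigma>_def N_def)
          moreover have "\<sigma> x \<notin> N" using a s2 xy(1) by (auto simp: \<sigma>_def E2_def)
          ultimately show ?thesis using xy by simp
        qed
      qed
      moreover have "\<forall>i\<in>I. \<sigma> i \<in> E i" using s1 s2 by (auto simp: \<sigma>_def E2_def)
      ultimately show ?thesis by blast
    next
      case False
      have strict: "card S < card (\<Union> (E ` S))" if "S \<subseteq> I" "S \<noteq> {}" "S \<noteq> I" for S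
        using False that not_le by blast
      obtain i0 where i0: "i0 \<in> I" using nonempty by blast
      have "1 \<le> card (E i0)" using hc[rule_format, of "{i0}"] i0 by auto
      then obtain e where e: "e \<in> E i0" by (metis card.empty ex_in_conv not_one_le_zero)
      define E2 where "E2 i = E i - {e}" for i
      have "card (I - {i0}) < card I" using fin i0 by (metis card_Diff1_less)
      moreover have "\<forall>T\<subseteq>I - {i0}. card T \<le> card (\<Union> (E2 ` T))"
      proof (intro allI impI)
        fix T assume T: "T \<subseteq> I - {i0}"
        show "card T \<le> card (\<Union> (E2 ` T))"
        proof (cases "T = {}")
          case True then show ?thesis by simp
        next
          case False
          then have lt: "card T < card (\<Union> (E ` T))" using strict[of T] T i0 by auto
          have "\<Union> (E2 ` T) = \<Union> (E ` T) - {e}" by (auto simp: E2_def)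
          moreover have "card (\<Union> (E ` T) - {e}) \<ge> card (\<Union> (E ` T)) - 1"
            by (metis card_Diff_singleton_if diff_le_self order_refl)
          ultimately show ?thesis using lt by simp
        qed
      qed
      moreover have "\<forall>i\<in>I - {i0}. finite (E2 i)" using finE by (auto simp: E2_def)
      ultimately obtain \<sigma>2 where s2: "inj_on \<sigma>2 (I - {i0})" "\<forall>i\<in>I - {i0}. \<sigma>2 i \<in> E2 i"
        using less.hyps[of "I - {i0}" E2] fin by blast
      define \<sigma> where "\<sigma> = \<sigma>2(i0 := e)"
      have "inj_on \<sigma> I"
      proof (rule inj_onI)
        fix x y assume xy: "x \<in> I" "y \<in> I" "\<sigma> x = \<sigma> y"
        show "x = y" using xy s2 by (auto simp: \<sigma>_def E2_def inj_on_def split: if_splits)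
      qed
      moreover have "\<forall>i\<in>I. \<sigma> i \<in> E i" using s2 e by (auto simp: \<sigma>_def E2_def)
      ultimately show ?thesis by blast
    qed
  qed
qed



definition l1 :: "nat \<Rightarrow> (nat \<Rightarrow> real) \<Rightarrow> real" where
  "l1 n w = (\<Sum>i<n. \<bar>w i\<bar>)"

definition dd :: "nat \<Rightarrow> (nat \<Rightarrow> real) set \<Rightarrow> (nat \<Rightarrow> real) \<Rightarrow> real" where
  "dd n A y = Inf (insert 1 ((\<lambda>z. l1 n (\<lambda>i. y i - z i)) ` A))"

lemma l1_nonneg: "0 \<le> l1 n w" by (simp add: l1_def sum_nonneg)

lemma dd_bdd: "bdd_below (insert 1 ((\<lambda>z. l1 n (\<lambda>i. y i - z i)) ` A))"
  by (rule bdd_belowI[where m=0]) (auto simp: l1_nonneg)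

lemma dd_bdd2: "bdd_below ((\<lambda>z. l1 n (\<lambda>i. y i - z i)) ` A)"
  by (rule bdd_belowI[where m=0]) (auto simp: l1_nonneg)

lemma dd_nonneg: "0 \<le> dd n A y"
  unfolding dd_def by (rule cInf_greatest) (auto simp: l1_nonneg)

lemma dd_le: "z \<in> A \<Longrightarrow> dd n A y \<le> l1 n (\<lambda>i. y i - z i)"
  unfolding dd_def by (rule cInf_lower) (auto simp: dd_bdd dd_bdd2)

lemma dd_le1: "dd n A y \<le> 1"
  unfolding dd_def by (rule cInf_lower) (auto simp: dd_bdd dd_bdd2)

lemma dd_lt: assumes "dd n A y < e" "e \<le> 1" shows "\<exists>z\<in>A. l1 n (\<lambda>i. y i - z i) < e"
  using assms unfolding dd_def by (subst (asm) cInf_less_iff) (auto simp: dd_bdd dd_bdd2)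

lemma l1_triangle: "l1 n (\<lambda>i. a i - c i) \<le> l1 n (\<lambda>i. a i - b i) + l1 n (\<lambda>i. b i - c i)"
  unfolding l1_def sum.distrib[symmetric] by (rule sum_mono) linarith

lemma l1_sym: "l1 n (\<lambda>i. a i - b i) = l1 n (\<lambda>i. b i - a i)"
  unfolding l1_def by (simp add: abs_minus_commute)

lemma dd_lip: "dd n A y \<le> dd n A y' + l1 n (\<lambda>i. y i - y' i)"
proof -
  have "dd n A y - l1 n (\<lambda>i. y i - y' i) \<le> dd n A y'"
    unfolding dd_def[of n A y']
  proof (rule cInf_greatest)
    fix t assume "t \<in> insert 1 ((\<lambda>z. l1 n (\<lambda>i. y' i - z i)) ` A)"
    then show "dd n A y - l1 n (\<lambda>i. y i - y' i) \<le> t"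
    proof
      assume "t = 1" then show ?thesis using dd_le1[of n A y] l1_nonneg[of n] by smt
    next
      assume "t \<in> (\<lambda>z. l1 n (\<lambda>i. y' i - z i)) ` A"
      then obtain z where z: "z \<in> A" "t = l1 n (\<lambda>i. y' i - z i)" by auto
      have "dd n A y \<le> l1 n (\<lambda>i. y i - z i)" using dd_le[OF z(1)] .
      also have "\<dots> \<le> l1 n (\<lambda>i. y i - y' i) + t" using l1_triangle z(2) by blast
      finally show ?thesis by simp
    qed
  qed simp
  then show ?thesis by simp
qed

lemma l1_tendsto: assumes "\<forall>i. (\<lambda>m. Y m i) \<longlonglongrightarrow> y i" shows "(\<lambda>m. l1 n (\<lambda>i. Y m i - y i)) \<longlonglongrightarrow> 0"
proof -
  have "(\<lambda>m. l1 n (\<lambda>i. Y m i - y i)) \<longlonglongrightarrow> (\<Sum>i<n. \<bar>y i - y i\<bar>)"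
    unfolding l1_def by (intro tendsto_intros assms[rule_format])
  then show ?thesis by simp
qed

lemma dd_cont: assumes "\<forall>i. (\<lambda>m. Y m i) \<longlonglongrightarrow> y i" shows "(\<lambda>m. dd n A (Y m)) \<longlonglongrightarrow> dd n A y"
proof -
  have "\<bar>dd n A (Y m) - dd n A y\<bar> \<le> l1 n (\<lambda>i. Y m i - y i)" for m
    using dd_lip[of n A "Y m" y] dd_lip[of n A y "Y m"] l1_sym[of n y "Y m"] by linarith
  from close_seq[OF tendsto_const l1_tendsto[OF assms] this] show ?thesis .
qed

lemma nat_count: fixes n s t :: nat assumes "n * s \<le> (n + 1) * t" "s \<le> n" shows "s \<le> t"
proof (rule ccontr)
  assume "\<not> s \<le> t"
  then have "t + 1 \<le> s" by simp
  then have "(n + 1) * (t + 1) \<le> (n + 1) * s" by (rule mult_le_mono2)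
  then show False using assms by (simp add: algebra_simps)
qed



lemma approx:
  assumes n1: "n \<ge> 1" and wf: "preferences_wf (Suc n) pref" and hu: "hungry (Suc n) pref"
    and e0: "0 < e" and e1: "e \<le> 1"
  shows "\<exists>y\<in>division n. \<forall>S\<subseteq>{..<Suc n}. card S \<le> n \<longrightarrow>
     card S \<le> card (\<Union>p\<in>S. {j. j < n \<and> dd n {z\<in>division n. j \<in> pref p n z} y < e})"
proof -
  define A where "A p j = {z\<in>division n. j \<in> pref p n z}" for p j
  define g where "g p j y = max 0 (e - dd n (A p j) y)" for p j y
  define h where "h p j y = y j * g p j y" for p j and y :: "nat \<Rightarrow> real"
  define S where "S p y = (\<Sum>j<n. h p j y)" for p y
  define F where "F p j y = h p j y / S p y" for p j y
  define G where "G j y = (\<Sum>p<Suc n. F p j y) / real (Suc n)" for j y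
  define mm where "mm j y = max 0 (1 / real n - G j y)" for j y
  define T where "T y = (\<lambda>j. if j < n then (y j + mm j y) / (1 + (\<Sum>i<n. mm i y)) else 0)" for y
  have g0: "0 \<le> g p j y" for p j y by (simp add: g_def)
  have gpos: "dd n (A p j) y < e" if "0 < g p j y" for p j y using that by (simp add: g_def)
  have h0: "0 \<le> h p j y" if "y \<in> division n" "j < n" for p j y
    using that g0 by (auto simp: h_def division_def)
  have Spos: "0 < S p y" if y: "y \<in> division n" and p: "p < Suc n" for p y
  proof -
    obtain j where j: "j \<in> pref p n y" "y j > 0" using hu y p unfolding hungry_def by blast
    have jn: "j < n" using wf y p j unfolding preferences_wf_def by blast
    have "y \<in> A p j" using y j by (simp add: A_def)
    then have "dd n (A p j) y \<le> 0" using dd_le[of y "A p j" n y] by (simp add: l1_def)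
    then have "g p j y = e" using dd_nonneg[of n "A p j" y] e0 by (simp add: g_def)
    then have "0 < h p j y" using j e0 by (simp add: h_def)
    also have "h p j y \<le> S p y" unfolding S_def
      by (rule member_le_sum) (use jn h0 y in auto)
    finally show ?thesis .
  qed
  have F0: "0 \<le> F p j y" if "y \<in> division n" "j < n" "p < Suc n" for p j y
    unfolding F_def using h0[OF that(1,2)] Spos[OF that(1,3)] by simp
  have Fpos: "dd n (A p j) y < e" if "0 < F p j y" "y \<in> division n" "p < Suc n" for p j y
  proof -
    have "0 < h p j y" using that Spos[of y p] by (simp add: F_def zero_less_divide_iff)
    then have "0 < g p j y" using g0[of p j y] by (auto simp: h_def zero_less_mult_iff)
    then show ?thesis by (rule gpos)
  qed
  have sumF: "(\<Sum>j<n. F p j y) = 1" if "y \<in> division n" "p < Suc n" for p y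
    using Spos[OF that] by (simp add: F_def S_def sum_divide_distrib[symmetric])
  have sumG: "(\<Sum>j<n. G j y) = 1" if y: "y \<in> division n" for y
  proof -
    have "(\<Sum>j<n. G j y) = (\<Sum>p<Suc n. \<Sum>j<n. F p j y) / real (Suc n)"
      by (simp add: G_def sum_divide_distrib[symmetric] sum.swap[of _ "{..<n}"])
    also have "\<dots> = 1" using sumF y by simp
    finally show ?thesis .
  qed
  have G0: "0 \<le> G j y" if "y \<in> division n" "j < n" for j y
    unfolding G_def by (intro divide_nonneg_pos sum_nonneg) (use F0 that in auto)
  have Gz: "G j y = 0" if "y j = 0" for j y
    using that by (simp add: G_def F_def h_def)
  have mm0: "0 \<le> mm j y" for j y by (simp add: mm_def)
  have T_into: "\<forall>y\<in>division n. T y \<in> division n"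
  proof
    fix y assume y: "y \<in> division n"
    have s0: "0 \<le> (\<Sum>i<n. mm i y)" by (simp add: sum_nonneg mm0)
    have "(\<Sum>j<n. T y j) = (\<Sum>j<n. (y j + mm j y)) / (1 + (\<Sum>i<n. mm i y))"
      by (simp add: T_def sum_divide_distrib)
    also have "\<dots> = 1" using y s0 by (simp add: sum.distrib division_def)
    finally show "T y \<in> division n" using y s0 mm0 by (auto simp: division_def T_def intro!: divide_nonneg_pos add_nonneg_nonneg)
  qed
  have T_cont: "seqcont n (division n) T"
    unfolding seqcont_def
  proof (intro allI impI)
    fix X y i assume X: "\<forall>m. X m \<in> division n" and y: "y \<in> division n"
      and lim: "\<forall>i. (\<lambda>m. X m i) \<longlonglongrightarrow> y i" and i: "i < n"
    have lg: "(\<lambda>m. g p j (X m)) \<longlonglongrightarrow> g p j y" for p j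
      unfolding g_def by (intro tendsto_intros dd_cont lim)
    have lh: "(\<lambda>m. h p j (X m)) \<longlonglongrightarrow> h p j y" for p j
      unfolding h_def by (intro tendsto_intros lg lim[rule_format])
    have lS: "(\<lambda>m. S p (X m)) \<longlonglongrightarrow> S p y" for p
      unfolding S_def by (intro tendsto_intros lh)
    have lF: "(\<lambda>m. F p j (X m)) \<longlonglongrightarrow> F p j y" if "p < Suc n" for p j
      unfolding F_def by (intro tendsto_intros lh lS) (use Spos[OF y that] in simp)
    have lG: "(\<lambda>m. G j (X m)) \<longlonglongrightarrow> G j y" for j
      unfolding G_def by (intro tendsto_intros lF) (auto simp del: of_nat_Suc)
    have lm: "(\<lambda>m. mm j (X m)) \<longlonglongrightarrow> mm j y" for j
      unfolding mm_def by (intro tendsto_intros lG)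
    have "(\<lambda>m. (X m i + mm i (X m)) / (1 + (\<Sum>i<n. mm i (X m)))) \<longlonglongrightarrow> (y i + mm i y) / (1 + (\<Sum>i<n. mm i y))"
    proof (intro tendsto_intros lm lim[rule_format])
      have "0 \<le> (\<Sum>i<n. mm i y)" by (simp add: sum_nonneg mm0)
      then show "1 + (\<Sum>i<n. mm i y) \<noteq> 0" by linarith
    qed
    then show "(\<lambda>m. T (X m) i) \<longlonglongrightarrow> T y i" using i by (simp add: T_def)
  qed
  obtain y where y: "y \<in> division n" and fxp: "\<forall>i<n. T y i = y i"
    using brouwer_division[OF n1 T_into T_cont] by blast
  define s where "s = (\<Sum>i<n. mm i y)"
  have s0: "0 \<le> s" by (simp add: s_def sum_nonneg mm0)
  have ys: "y j * s = mm j y" if "j < n" for j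
  proof -
    have "y j = (y j + mm j y) / (1 + s)" using fxp that by (simp add: T_def s_def)
    then have "y j * (1 + s) = y j + mm j y" using s0 by (simp add: field_simps)
    then show ?thesis by (simp add: algebra_simps)
  qed
  have Gb: "G j y = 1 / real n" if "j < n" for j
  proof (cases "s = 0")
    case True
    then have "\<forall>i\<in>{..<n}. mm i y = 0" using sum_nonneg_eq_0_iff[of "{..<n}" "\<lambda>i. mm i y"] mm0 s_def by auto
    have ge: "\<forall>i<n. 1 / real n \<le> G i y"
    proof (intro allI impI)
      fix i assume "i < n"
      then have "mm i y = 0" using \<open>\<forall>i\<in>{..<n}. mm i y = 0\<close> by auto
      then show "1 / real n \<le> G i y" unfolding mm_def by linarith
    qed
    have "(\<Sum>i<n. G i y - 1 / real n) = 0" using sumG[OF y] n1 by (simp add: sum_subtractf)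
    then have "\<forall>i\<in>{..<n}. G i y - 1 / real n = 0"
      using sum_nonneg_eq_0_iff[of "{..<n}" "\<lambda>i. G i y - 1 / real n"] ge by auto
    then show ?thesis using that by auto
  next
    case False
    then have spos: "0 < s" using s0 by simp
    have "G i y < 1 / real n" if i: "i < n" for i
    proof (cases "y i = 0")
      case True
      then have "mm i y = 0" using ys[OF i] by simp
      moreover have "mm i y = 1 / real n" using Gz[of y i, OF True] n1 by (simp add: mm_def)
      ultimately show ?thesis using n1 by simp
    next
      case False
      moreover have "0 \<le> y i" using y i by (simp add: division_def)
      ultimately have "0 < y i" by simp
      then have "0 < mm i y" using ys[OF i] spos by (metis mult_pos_pos)
      then show ?thesis by (simp add: mm_def max_def split: if_splits)
    qed
    then have "(\<Sum>i<n. G i y) < (\<Sum>i<n. 1 / real n)"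
      using n1 by (intro sum_strict_mono) (auto simp: lessThan_empty_iff)
    then show ?thesis using sumG[OF y] n1 by simp
  qed
  show ?thesis
  proof (intro bexI[OF _ y] allI impI)
    fix P assume P: "P \<subseteq> {..<Suc n}" and cP: "card P \<le> n"
    define N where "N = (\<Union>p\<in>P. {j. j < n \<and> dd n {z\<in>division n. j \<in> pref p n z} y < e})"
    have Nsub: "N \<subseteq> {..<n}" by (auto simp: N_def)
    have finN: "finite N" using Nsub finite_subset by blast
    have finP: "finite P" using P finite_subset by blast
    have "(\<Sum>p\<in>P. \<Sum>j<n. F p j y) = (\<Sum>p\<in>P. 1)"
      by (rule sum.cong[OF refl]) (use sumF[OF y] P in auto)
    then have "real (card P) = (\<Sum>p\<in>P. \<Sum>j<n. F p j y)" by simp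
    also have "\<dots> = (\<Sum>p\<in>P. \<Sum>j\<in>N. F p j y)"
    proof (rule sum.cong[OF refl])
      fix p assume p: "p \<in> P"
      show "(\<Sum>j<n. F p j y) = (\<Sum>j\<in>N. F p j y)"
      proof (rule sum.mono_neutral_right)
        show "\<forall>j\<in>{..<n} - N. F p j y = 0"
        proof
          fix j assume j: "j \<in> {..<n} - N"
          show "F p j y = 0"
          proof (rule ccontr)
            assume "F p j y \<noteq> 0"
            then have "0 < F p j y" using F0[OF y _ ] j p P by force
            then have "dd n (A p j) y < e" using Fpos y p P by blast
            then show False using j p by (auto simp: N_def A_def)
          qed
        qed
      qed (use Nsub in auto)
    qed
    also have "\<dots> \<le> (\<Sum>p<Suc n. \<Sum>j\<in>N. F p j y)"
      by (rule sum_mono2) (use P Nsub in \<open>auto intro!: sum_nonneg F0[OF y]\<close>)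
    also have "\<dots> = (\<Sum>j\<in>N. \<Sum>p<Suc n. F p j y)" by (rule sum.swap)
    also have "\<dots> = (\<Sum>j\<in>N. real (Suc n) / real n)"
    proof (rule sum.cong[OF refl])
      fix j assume "j \<in> N"
      then have "j < n" using Nsub by auto
      then have "(\<Sum>p<Suc n. F p j y) / real (Suc n) = 1 / real n" using Gb G_def by simp
      then show "(\<Sum>p<Suc n. F p j y) = real (Suc n) / real n" by (simp add: field_simps)
    qed
    also have "\<dots> = real (card N) * real (Suc n) / real n" by simp
    finally have "real (card P) * real n \<le> real (card N) * real (Suc n)"
      using n1 by (simp add: field_simps)
    then have "n * card P \<le> (n + 1) * card N"
      by (metis Suc_eq_plus1 mult.commute of_nat_le_iff of_nat_mult)
    then show "card P \<le> card N" using nat_count cP by blast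
  qed
qed



theorem corollary1p1:
  fixes k :: nat and pref :: "nat \<Rightarrow> nat \<Rightarrow> (nat \<Rightarrow> real) \<Rightarrow> nat set"
  assumes "k \<ge> 2"
    and "preferences_wf k pref"
    and "hungry k pref"
    and "closed_preferences k pref"
  shows "\<exists>y\<in>division (k - 1). \<forall>l<k. \<exists>\<sigma>.
           bij_betw \<sigma> ({..<k} - {l}) {..<k - 1} \<and>
           (\<forall>i\<in>{..<k} - {l}. \<sigma> i \<in> pref i (k - 1) y)"
proof -
  define n where "n = k - 1"
  have kn: "k = Suc n" using assms(1) by (simp add: n_def)
  have n1: "n \<ge> 1" using assms(1) by (simp add: n_def)
  have wf: "preferences_wf (Suc n) pref" and hu: "hungry (Suc n) pref"
    and cl: "closed_preferences (Suc n) pref" using assms kn by auto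
  define e where "e m = 1 / real (Suc (Suc m))" for m
  define Ed where "Ed y m p = {j. j < n \<and> dd n {z\<in>division n. j \<in> pref p n z} y < e m}" for y m p
  have "\<forall>m. \<exists>y\<in>division n. \<forall>S\<subseteq>{..<Suc n}. card S \<le> n \<longrightarrow> card S \<le> card (\<Union>p\<in>S. Ed y m p)"
  proof
    fix m
    have "0 < e m" "e m \<le> 1" by (auto simp: e_def)
    from approx[OF n1 wf hu this] show "\<exists>y\<in>division n. \<forall>S\<subseteq>{..<Suc n}. card S \<le> n \<longrightarrow> card S \<le> card (\<Union>p\<in>S. Ed y m p)"
      unfolding Ed_def .
  qed
  then obtain Y where Yd: "\<And>m. Y m \<in> division n"
    and Yh: "\<And>m. \<forall>S\<subseteq>{..<Suc n}. card S \<le> n \<longrightarrow> card S \<le> card (\<Union>p\<in>S. Ed (Y m) m p)"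
    by metis
  define Em where "Em m = (\<lambda>p. if p < Suc n then Ed (Y m) m p else undefined)" for m
  have "range Em \<subseteq> PiE {..<Suc n} (\<lambda>_. Pow {..<n})"
    by (auto simp: Em_def Ed_def PiE_def extensional_def)
  then have "finite (Em ` UNIV)" by (rule finite_subset) (simp add: finite_PiE)
  then obtain c where "infinite (Em -` {c})" using inf_img_fin_domE by blast
  from infinite_enumerate[OF this] obtain r1 :: "nat \<Rightarrow> nat"
    where r1: "strict_mono r1" and r1m: "\<And>m. r1 m \<in> Em -` {c}" by blast
  have r1c: "\<And>m. Em (r1 m) = c" using r1m by simp
  have "\<forall>m i. i < n \<longrightarrow> Y (r1 m) i \<in> {0..1}"
    using Yd division_cube by (auto simp: cube_def)
  then obtain r2 L where r2: "strict_mono r2" and L: "\<forall>i<n. L i \<in> {0..1} \<and> (\<lambda>m. Y (r1 (r2 m)) i) \<longlonglongrightarrow> L i"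
    using subseq_conv[of n "\<lambda>m. Y (r1 m)"] by blast
  define R where "R = r1 \<circ> r2"
  have R: "strict_mono R" using r1 r2 by (simp add: R_def strict_mono_o)
  have Rc: "\<And>m. Em (R m) = c" using r1c by (simp add: R_def)
  define y where "y i = (if i < n then L i else 0)" for i
  have ylim: "\<forall>i. (\<lambda>m. Y (R m) i) \<longlonglongrightarrow> y i"
  proof
    fix i show "(\<lambda>m. Y (R m) i) \<longlonglongrightarrow> y i"
    proof (cases "i < n")
      case True then show ?thesis using L by (simp add: y_def R_def)
    next
      case False then have "\<And>m. Y (R m) i = 0" using Yd by (simp add: division_def)
      then show ?thesis using False by (simp add: y_def)
    qed
  qed
  have yd: "y \<in> division n"
  proof -
    have "(\<lambda>m. \<Sum>i<n. Y (R m) i) \<longlonglongrightarrow> (\<Sum>i<n. y i)" by (intro tendsto_intros ylim[rule_format])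
    moreover have "\<And>m. (\<Sum>i<n. Y (R m) i) = 1" using Yd by (simp add: division_def)
    ultimately have "(\<lambda>m. 1::real) \<longlonglongrightarrow> (\<Sum>i<n. y i)" by simp
    then have "(\<Sum>i<n. y i) = 1" using LIMSEQ_unique[OF _ tendsto_const] by blast
    then show ?thesis using L by (auto simp: division_def y_def)
  qed
  have e0: "(\<lambda>m. 1 / real (Suc (R m))) \<longlonglongrightarrow> 0" using R by (rule inv_suc_subseq)
  have cpref: "c p \<subseteq> pref p n y" if p: "p < Suc n" for p
  proof
    fix j assume j: "j \<in> c p"
    have "\<forall>m. \<exists>z\<in>{z\<in>division n. j \<in> pref p n z}. l1 n (\<lambda>i. Y (R m) i - z i) < e (R m)"
    proof
      fix m
      have "j \<in> Ed (Y (R m)) (R m) p" using Rc[of m] j p by (auto simp: Em_def)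
      then have "dd n {z\<in>division n. j \<in> pref p n z} (Y (R m)) < e (R m)" by (simp add: Ed_def)
      moreover have "e (R m) \<le> 1" by (simp add: e_def)
      ultimately show "\<exists>z\<in>{z\<in>division n. j \<in> pref p n z}. l1 n (\<lambda>i. Y (R m) i - z i) < e (R m)"
        by (rule dd_lt)
    qed
    then have "\<forall>m. \<exists>z. z \<in> {z\<in>division n. j \<in> pref p n z} \<and> l1 n (\<lambda>i. Y (R m) i - z i) < e (R m)"
      by blast
    from choice[OF this] obtain Z where
      ZZ: "\<forall>m. Z m \<in> {z\<in>division n. j \<in> pref p n z} \<and> l1 n (\<lambda>i. Y (R m) i - Z m i) < e (R m)" by blast
    have Z: "\<And>m. Z m \<in> division n" "\<And>m. j \<in> pref p n (Z m)" using ZZ by auto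
    have Zc: "\<And>m. l1 n (\<lambda>i. Y (R m) i - Z m i) < e (R m)" using ZZ by auto
    have Zlim: "\<forall>t. (\<lambda>m. Z m t) \<longlonglongrightarrow> y t"
    proof
      fix t show "(\<lambda>m. Z m t) \<longlonglongrightarrow> y t"
      proof (cases "t < n")
        case True
        have "\<bar>Z m t - Y (R m) t\<bar> \<le> 1 / real (Suc (R m))" for m
        proof -
          have "\<bar>Z m t - Y (R m) t\<bar> = \<bar>Y (R m) t - Z m t\<bar>" by simp
          also have "\<dots> \<le> l1 n (\<lambda>i. Y (R m) i - Z m i)" unfolding l1_def
            by (rule member_le_sum[where f="\<lambda>i. \<bar>Y (R m) i - Z m i\<bar>"]) (use True in auto)
          also have "\<dots> \<le> e (R m)" using Zc[of m] by simp
          also have "\<dots> \<le> 1 / real (Suc (R m))" by (simp add: e_def frac_le)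
          finally show ?thesis .
        qed
        then show ?thesis using close_seq[OF ylim[rule_format, of t] e0, of "\<lambda>m. Z m t"] by blast
      next
        case False
        then have "\<And>m. Z m t = 0" using Z by (simp add: division_def)
        then show ?thesis using False by (simp add: y_def)
      qed
    qed
    show "j \<in> pref p n y"
      using cl p Z yd Zlim unfolding closed_preferences_def by blast
  qed
  have hallc: "\<forall>S\<subseteq>{..<Suc n}. card S \<le> n \<longrightarrow> card S \<le> card (\<Union>p\<in>S. c p)"
  proof (intro allI impI)
    fix S assume S: "S \<subseteq> {..<Suc n}" "card S \<le> n"
    have cp: "c p = Ed (Y (R 0)) (R 0) p" if "p < Suc n" for p
      using Rc[of 0, symmetric] that by (simp add: Em_def)
    have "(\<Union>p\<in>S. Ed (Y (R 0)) (R 0) p) = (\<Union>p\<in>S. c p)"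
      by (rule SUP_cong[OF refl]) (use S cp in auto)
    then show "card S \<le> card (\<Union>p\<in>S. c p)" using Yh[of "R 0"] S by metis
  qed
  have csub: "c p \<subseteq> {..<n}" if "p < Suc n" for p
    using Rc[of 0] that by (auto simp: Em_def Ed_def)
  show ?thesis
    unfolding kn diff_Suc_1
  proof (intro bexI[OF _ yd] allI impI)
    fix l assume l: "l < Suc n"
    let ?I = "{..<Suc n} - {l}"
    have cI: "card ?I = n" using l by simp
    have "\<exists>\<sigma>. inj_on \<sigma> ?I \<and> (\<forall>i\<in>?I. \<sigma> i \<in> c i)"
    proof (rule hall)
      show "finite ?I" by simp
      show "\<forall>i\<in>?I. finite (c i)" using csub by (meson DiffD1 finite_lessThan finite_subset lessThan_iff)
      show "\<forall>S\<subseteq>?I. card S \<le> card (\<Union> (c ` S))"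
      proof (intro allI impI)
        fix S assume "S \<subseteq> ?I"
        moreover then have "card S \<le> n" using cI by (metis card_mono finite_Diff finite_lessThan)
        ultimately show "card S \<le> card (\<Union> (c ` S))" using hallc by blast
      qed
    qed
    then obtain \<sigma> where inj: "inj_on \<sigma> ?I" and sc: "\<forall>i\<in>?I. \<sigma> i \<in> c i" by blast
    have img: "\<sigma> ` ?I \<subseteq> {..<n}" using sc csub by blast
    have "card (\<sigma> ` ?I) = n" using card_image[OF inj] cI by simp
    then have "\<sigma> ` ?I = {..<n}" using img by (metis card_lessThan card_subset_eq finite_lessThan)
    then have "bij_betw \<sigma> ?I {..<n}" using inj by (simp add: bij_betw_def)
    moreover have "\<forall>i\<in>?I. \<sigma> i \<in> pref i n y" using sc cpref by blast
    ultimately show "\<exists>\<sigma>. bij_betw \<sigma> ?I {..<n} \<and> (\<forall>i\<in>?I. \<sigma> i \<in> pref i n y)" by blast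
  qed
qed

end
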